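(* Let $\mathcal{L}:\mathbb{R}^d\to\mathbb{R}$ be differentiable on $\mathbb{R}^d\setminus\{\mathbf{0}\}$ and radially invariant ($\mathcal{L}(\rho\mathbf{x})=\mathcal{L}(\mathbf{x})$ for all $\rho>0$). Consider the generic optimization scheme $$\mathbf{x}_{k+1}=\mathbf{x}_k-\eta_k\,\mathbf{a}_k\oslash\mathbf{b}_k,\qquad \mathbf{a}_k=\beta\mathbf{a}_{k-1}+\nabla\mathcal{L}(\mathbf{x}_k)+\lambda\mathbf{x}_k,$$ with $\eta_k>0$, $\beta,\lambda\in\mathbb{R}$, $\mathbf{a}_{-1}=\mathbf{0}$, and $\mathbf{b}_k\in\mathbb{R}^d$ having all entries nonzero. Fix a step $k$ with $\mathbf{x}_k\neq\mathbf{0}$, write $r_k=\|\mathbf{x}_k\|$, $\mathbf{u}_k=\mathbf{x}_k/r_k$, and define $$\mathbf{c}_k=r_k\,\mathbf{a}_k\oslash\frac{\mathbf{b}_k}{d^{-1/2}\|\mathbf{b}_k\|},\qquad A_k=\frac{\eta_k}{r_k^2\,d^{-1/2}\|\mathbf{b}_k\|},\qquad \eta^e_k=A_k\bigl(1-A_k\langle\mathbf{c}_k,\mathbf{u}_k\rangle\bigr)^{-1},$$ and $\mathbf{c}_k^{\perp}=\mathbf{c}_k-\langle\mathbf{c}_k,\mathbf{u}_k\rangle\mathbf{u}_k$. Assume $1-A_k\langle\mathbf{c}_k,\mathbf{u}_k\rangle>0$. Then $\mathbf{x}_{k+1}\neq\mathbf{0}$, and with $\mathbf{u}_{k+1}=\mathbf{x}_{k+1}/\|\mathbf{x}_{k+1}\|$,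 $$\mathbf{u}_{k+1}=\frac{\mathbf{u}_k-\eta^e_k\mathbf{c}_k^{\perp}}{\sqrt{1+(\eta^e_k\|\mathbf{c}_k^{\perp}\|)^2}};$$ moreover $$\mathbf{u}_{k+1}=\operatorname{Exp}_{\mathbf{u}_k}\!\Bigl(-\bigl[1+O\bigl((\eta^e_k\|\mathbf{c}_k^{\perp}\|)^2\bigr)\bigr]\eta^e_k\mathbf{c}_k^{\perp}\Bigr),$$ where the bracketed scalar factor is $1+O(z^2)$ as $z=\eta^e_k\|\mathbf{c}_k^{\perp}\|\to 0$.
   Context: $\oslash$ denotes element-wise (Hadamard) division, $\|\cdot\|$ the Euclidean norm, $\langle\cdot,\cdot\rangle$ the Euclidean inner product. $\mathcal{S}_{d-1}=\{\mathbf{u}\in\mathbb{R}^d:\|\mathbf{u}\|=1\}$ is the unit sphere with its canonical (angular) metric, and $\operatorname{Exp}_{\mathbf{u}}$ is its exponential map at $\mathbf{u}$: for $\mathbf{w}$ tangent at $\mathbf{u}$ ($\langle\mathbf{w},\mathbf{u}\rangle=0$), $\operatorname{Exp}_{\mathbf{u}}(\mathbf{w})=\cos(\|\mathbf{w}\|)\mathbf{u}+\sin(\|\mathbf{w}\|)\mathbf{w}/\|\mathbf{w}\|$ (and $\operatorname{Exp}_{\mathbf{u}}(\mathbf{0})=\mathbf{u}$). *)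

theory Defs
  imports "HOL-Analysis.Analysis" "HOL-Library.Landau_Symbols"
begin

definition hdiv :: "real^'n \<Rightarrow> real^'n \<Rightarrow> real^'n" where
  "hdiv a b = (\<chi> i. a $ i / b $ i)"

definition sphere_Exp :: "real^'n \<Rightarrow> real^'n \<Rightarrow> real^'n" where
  "sphere_Exp u w = (if w = 0 then u
     else cos (norm w) *\<^sub>R u + sin (norm w) *\<^sub>R (w /\<^sub>R norm w))"

definition radially_invariant :: "(real^'n \<Rightarrow> real) \<Rightarrow> bool" where
  "radially_invariant L \<longleftrightarrow> (\<forall>x \<rho>. \<rho> > 0 \<longrightarrow> L (\<rho> *\<^sub>R x) = L x)"

end

theory Submission
  imports Defs
begin

definition phi0 :: "real \<Rightarrow> real" where
  "phi0 z = (if z = 0 then 1 else arctan z / z)"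

lemma arctan_upper: "z \<ge> 0 \<Longrightarrow> arctan z \<le> (z::real)"
proof -
  assume z: "z \<ge> 0"
  have "(\<lambda>t. t - arctan t) 0 \<le> (\<lambda>t. t - arctan t) z"
  proof (rule DERIV_nonneg_imp_nondecreasing[OF z])
    fix t :: real
    show "\<exists>y. DERIV (\<lambda>t. t - arctan t) t :> y \<and> y \<ge> 0"
    proof (intro exI conjI)
      show "DERIV (\<lambda>t. t - arctan t) t :> 1 - inverse (1 + t\<^sup>2)"
        by (auto intro!: derivative_eq_intros DERIV_arctan)
      have "inverse (1 + t\<^sup>2) \<le> 1" by (simp add: inverse_le_1_iff)
      then show "1 - inverse (1 + t\<^sup>2) \<ge> 0" by simp
    qed
  qed
  then show ?thesis by simp
qed

lemma arctan_lower: "z \<ge> 0 \<Longrightarrow> (z::real) - z ^ 3 / 3 \<le> arctan z"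
proof -
  assume z: "z \<ge> 0"
  have "(\<lambda>t. arctan t - t + t ^ 3 / 3) 0 \<le> (\<lambda>t. arctan t - t + t ^ 3 / 3) z"
  proof (rule DERIV_nonneg_imp_nondecreasing[OF z])
    fix t :: real
    show "\<exists>y. DERIV (\<lambda>t. arctan t - t + t ^ 3 / 3) t :> y \<and> y \<ge> 0"
    proof (intro exI conjI)
      show "DERIV (\<lambda>t. arctan t - t + t ^ 3 / 3) t :> inverse (1 + t\<^sup>2) - 1 + t\<^sup>2"
        by (auto intro!: derivative_eq_intros DERIV_arctan)
      have p: "1 + t\<^sup>2 > 0" by (simp add: add_pos_nonneg)
      have "inverse (1 + t\<^sup>2) - 1 + t\<^sup>2 = t ^ 4 / (1 + t\<^sup>2)"
        using p by (simp add: field_simps power2_eq_square power4_eq_xxxx)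
      also have "\<dots> \<ge> 0" using p by simp
      finally show "inverse (1 + t\<^sup>2) - 1 + t\<^sup>2 \<ge> 0" .
    qed
  qed
  then show ?thesis by simp
qed

lemma arctan_err: "\<bar>arctan z - z\<bar> \<le> \<bar>z\<bar> ^ 3 / 3"
proof (cases "z \<ge> 0")
  case True
  then show ?thesis using arctan_upper[OF True] arctan_lower[OF True] by simp
next
  case False
  then have m: "- z \<ge> 0" by simp
  have "\<bar>arctan (- z) - (- z)\<bar> \<le> \<bar>- z\<bar> ^ 3 / 3"
    using arctan_upper[OF m] arctan_lower[OF m] m by simp
  then show ?thesis by (simp add: arctan_minus abs_minus_commute)
qed

lemma phi0_bigo: "(\<lambda>z. phi0 z - 1) \<in> O[at 0](\<lambda>z. z ^ 2)"
proof (rule bigoI[where c = "1/3"])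
  show "eventually (\<lambda>z. norm (phi0 z - 1) \<le> 1/3 * norm (z ^ 2)) (at (0::real))"
    unfolding eventually_at_filter
  proof (intro always_eventually allI impI)
    fix z :: real assume z: "z \<noteq> 0"
    have "phi0 z - 1 = (arctan z - z) / z" using z by (simp add: phi0_def field_simps)
    then have "norm (phi0 z - 1) = \<bar>arctan z - z\<bar> / \<bar>z\<bar>" by (simp add: abs_divide)
    also have "\<dots> \<le> (\<bar>z\<bar> ^ 3 / 3) / \<bar>z\<bar>"
      by (rule divide_right_mono[OF arctan_err]) simp
    also have "\<dots> = 1/3 * norm (z ^ 2)" using z by (simp add: power3_eq_cube power2_eq_square field_simps)
    finally show "norm (phi0 z - 1) \<le> 1/3 * norm (z ^ 2)" .
  qed
qed

lemma geom:
  fixes u cp :: "real^'n"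
  assumes nu: "norm u = 1" and perp: "cp \<bullet> u = 0" and ee: "ee > 0"
  shows "(u - ee *\<^sub>R cp) /\<^sub>R sqrt (1 + (ee * norm cp) ^ 2) =
         sphere_Exp u (- (phi0 (ee * norm cp) * ee) *\<^sub>R cp)"
proof (cases "cp = 0")
  case True
  then show ?thesis by (simp add: sphere_Exp_def)
next
  case False
  define z where "z = ee * norm cp"
  have ncp: "norm cp > 0" using False by simp
  have z: "z > 0" using ee ncp by (simp add: z_def)
  have at: "arctan z > 0" using z by (simp add: arctan_less_zero_iff) 
  have ph: "phi0 z * ee = arctan z / norm cp"
    using z ee ncp by (simp add: phi0_def z_def field_simps)
  define w where "w = - (arctan z / norm cp) *\<^sub>R cp"
  have nw: "norm w = arctan z" using at ncp by (simp add: w_def)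
  have w0: "w \<noteq> 0" using nw at by auto
  have wn: "w /\<^sub>R norm w = - (1 / norm cp) *\<^sub>R cp"
    using at ncp by (simp add: nw w_def)
  have "sphere_Exp u (- (phi0 z * ee) *\<^sub>R cp) = sphere_Exp u w"
    by (simp add: ph w_def)
  also have "\<dots> = (1 / sqrt (1 + z^2)) *\<^sub>R u - (z / sqrt (1 + z^2) / norm cp) *\<^sub>R cp"
  proof -
    have "sphere_Exp u w = cos (norm w) *\<^sub>R u + sin (norm w) *\<^sub>R (w /\<^sub>R norm w)"
      using w0 by (simp add: sphere_Exp_def)
    also have "\<dots> = cos (arctan z) *\<^sub>R u + sin (arctan z) *\<^sub>R (- (1 / norm cp) *\<^sub>R cp)"
      by (metis wn nw)
    finally show ?thesis by (simp add: cos_arctan sin_arctan)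
  qed
  also have "\<dots> = (u - ee *\<^sub>R cp) /\<^sub>R sqrt (1 + z ^ 2)"
    using ncp by (simp add: z_def algebra_simps divide_inverse)
  finally show ?thesis by (simp add: z_def)
qed

theorem theorem2:
  "\<exists>\<phi> :: real \<Rightarrow> real. (\<lambda>z. \<phi> z - 1) \<in> O[at 0](\<lambda>z. z ^ 2) \<and>
    (\<forall>(L :: real^'n \<Rightarrow> real) (grad :: real^'n \<Rightarrow> real^'n)
       (x :: nat \<Rightarrow> real^'n) (a :: nat \<Rightarrow> real^'n) (b :: nat \<Rightarrow> real^'n)
       (eta :: nat \<Rightarrow> real) (\<beta> :: real) (lam :: real) (k :: nat).
      ((\<forall>y. y \<noteq> 0 \<longrightarrow> (L has_derivative (\<lambda>h. grad y \<bullet> h)) (at y)) \<and>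
       radially_invariant L \<and>
       (\<forall>j. eta j > 0) \<and>
       (\<forall>j i. b j $ i \<noteq> 0) \<and>
       a 0 = grad (x 0) + lam *\<^sub>R x 0 \<and>
       (\<forall>j. a (Suc j) = \<beta> *\<^sub>R a j + grad (x (Suc j)) + lam *\<^sub>R x (Suc j)) \<and>
       (\<forall>j. x (Suc j) = x j - eta j *\<^sub>R hdiv (a j) (b j)) \<and>
       x k \<noteq> 0)
      \<longrightarrow>
      (let r = norm (x k);
           u = x k /\<^sub>R r;
           s = norm (b k) / sqrt (real CARD('n));
           c = r *\<^sub>R hdiv (a k) (b k /\<^sub>R s);
           A = eta k / (r ^ 2 * s);
           ee = A / (1 - A * (c \<bullet> u));
           cp = c - (c \<bullet> u) *\<^sub>R u;
           u1 = x (Suc k) /\<^sub>R norm (x (Suc k))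
       in 1 - A * (c \<bullet> u) > 0 \<longrightarrow>
          x (Suc k) \<noteq> 0 \<and>
          u1 = (u - ee *\<^sub>R cp) /\<^sub>R sqrt (1 + (ee * norm cp) ^ 2) \<and>
          u1 = sphere_Exp u (- (\<phi> (ee * norm cp) * ee) *\<^sub>R cp)))"
proof (rule exI[of _ phi0], intro conjI phi0_bigo allI impI)
  fix L :: "real^'n \<Rightarrow> real" and grad :: "real^'n \<Rightarrow> real^'n"
    and x a b :: "nat \<Rightarrow> real^'n" and eta :: "nat \<Rightarrow> real" and \<beta> lam :: real and k :: nat
  assume H: "(\<forall>y. y \<noteq> 0 \<longrightarrow> (L has_derivative (\<lambda>h. grad y \<bullet> h)) (at y)) \<and>
       radially_invariant L \<and>
       (\<forall>j. eta j > 0) \<and>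
       (\<forall>j i. b j $ i \<noteq> 0) \<and>
       a 0 = grad (x 0) + lam *\<^sub>R x 0 \<and>
       (\<forall>j. a (Suc j) = \<beta> *\<^sub>R a j + grad (x (Suc j)) + lam *\<^sub>R x (Suc j)) \<and>
       (\<forall>j. x (Suc j) = x j - eta j *\<^sub>R hdiv (a j) (b j)) \<and>
       x k \<noteq> 0"
  have etapos: "eta k > 0" using H by blast
  have bnz: "\<And>i. b k $ i \<noteq> 0" using H by blast
  have step: "x (Suc k) = x k - eta k *\<^sub>R hdiv (a k) (b k)" using H by blast
  have xk: "x k \<noteq> 0" using H by blast
  define r where "r = norm (x k)"
  define u where "u = x k /\<^sub>R r"
  define s where "s = norm (b k) / sqrt (real CARD('n))"
  define c where "c = r *\<^sub>R hdiv (a k) (b k /\<^sub>R s)"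
  define A where "A = eta k / (r ^ 2 * s)"
  define ee where "ee = A / (1 - A * (c \<bullet> u))"
  define cp where "cp = c - (c \<bullet> u) *\<^sub>R u"
  have rpos: "r > 0" using xk by (simp add: r_def)
  have bk0: "b k \<noteq> 0" using bnz by (metis zero_index)
  have spos: "s > 0" using bk0 by (simp add: s_def)
  have Apos: "A > 0" using etapos rpos spos by (simp add: A_def)
  have nu: "norm u = 1" using rpos by (simp add: u_def r_def)
  have xku: "x k = r *\<^sub>R u" using rpos by (simp add: u_def)
  have perp: "cp \<bullet> u = 0"
    using nu by (simp add: cp_def inner_diff_left dot_square_norm power2_eq_square)
  have hc: "hdiv (a k) (b k) = (1 / (r * s)) *\<^sub>R c"
    using rpos spos bnz by (simp add: c_def hdiv_def vec_eq_iff field_simps)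
  show "let r = norm (x k);
           u = x k /\<^sub>R r;
           s = norm (b k) / sqrt (real CARD('n));
           c = r *\<^sub>R hdiv (a k) (b k /\<^sub>R s);
           A = eta k / (r ^ 2 * s);
           ee = A / (1 - A * (c \<bullet> u));
           cp = c - (c \<bullet> u) *\<^sub>R u;
           u1 = x (Suc k) /\<^sub>R norm (x (Suc k))
       in 1 - A * (c \<bullet> u) > 0 \<longrightarrow>
          x (Suc k) \<noteq> 0 \<and>
          u1 = (u - ee *\<^sub>R cp) /\<^sub>R sqrt (1 + (ee * norm cp) ^ 2) \<and>
          u1 = sphere_Exp u (- (phi0 (ee * norm cp) * ee) *\<^sub>R cp)"
    unfolding Let_def r_def[symmetric] u_def[symmetric] s_def[symmetric] c_def[symmetric]
      A_def[symmetric] ee_def[symmetric] cp_def[symmetric]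
  proof
    assume D: "1 - A * (c \<bullet> u) > 0"
    define m where "m = r * (1 - A * (c \<bullet> u))"
    have mpos: "m > 0" using rpos D by (simp add: m_def)
    have eepos: "ee > 0" using Apos D by (simp add: ee_def)
    have "x (Suc k) = r *\<^sub>R u - (eta k / (r * s)) *\<^sub>R c"
      using step xku hc by simp
    also have "eta k / (r * s) = r * A" using rpos spos by (simp add: A_def power2_eq_square field_simps)
    also have "r *\<^sub>R u - (r * A) *\<^sub>R c = m *\<^sub>R (u - ee *\<^sub>R cp)"
    proof -
      have me: "m * ee = r * A" using D by (simp add: m_def ee_def)
      have "m *\<^sub>R (u - ee *\<^sub>R cp) = m *\<^sub>R u + (m * ee * (c \<bullet> u)) *\<^sub>R u - (m * ee) *\<^sub>R c"
        by (simp add: cp_def algebra_simps)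
      also have "\<dots> = r *\<^sub>R u - (r * A) *\<^sub>R c"
      proof -
        have me2: "m * ee * (c \<bullet> u) = r * A * (c \<bullet> u)" using me by simp
        show ?thesis unfolding me2 me by (simp add: m_def algebra_simps)
      qed
      finally show ?thesis by simp
    qed
    finally have xs: "x (Suc k) = m *\<^sub>R (u - ee *\<^sub>R cp)" .
    have n2: "(norm (u - ee *\<^sub>R cp))^2 = 1 + (ee * norm cp) ^ 2"
    proof -
      have uu: "u \<bullet> u = 1" using nu by (simp add: norm_eq_1)
      have cc: "cp \<bullet> cp = (norm cp)^2" by (simp add: power2_norm_eq_inner)
      have uc: "u \<bullet> cp = 0" using perp by (simp add: inner_commute)
      have "(norm (u - ee *\<^sub>R cp))^2 = (u - ee *\<^sub>R cp) \<bullet> (u - ee *\<^sub>R cp)"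
        by (simp only: power2_norm_eq_inner)
      also have "\<dots> = u \<bullet> u - 2 * ee * (u \<bullet> cp) + ee^2 * (cp \<bullet> cp)"
        by (simp add: inner_diff_left inner_diff_right inner_commute power2_eq_square algebra_simps)
      also have "\<dots> = 1 + (ee * norm cp) ^ 2" by (simp add: uu uc cc power_mult_distrib)
      finally show ?thesis .
    qed
    have nn: "norm (u - ee *\<^sub>R cp) = sqrt (1 + (ee * norm cp) ^ 2)"
      using n2 by (metis norm_ge_zero real_sqrt_unique)
    have npos: "sqrt (1 + (ee * norm cp) ^ 2) > 0" by (simp add: add_pos_nonneg)
    have nx: "norm (x (Suc k)) = m * sqrt (1 + (ee * norm cp) ^ 2)"
      using xs mpos nn by simp
    have u1: "x (Suc k) /\<^sub>R norm (x (Suc k)) = (u - ee *\<^sub>R cp) /\<^sub>R sqrt (1 + (ee * norm cp) ^ 2)"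
      using mpos npos by (simp add: nx xs nn)
    show "x (Suc k) \<noteq> 0 \<and>
          x (Suc k) /\<^sub>R norm (x (Suc k)) = (u - ee *\<^sub>R cp) /\<^sub>R sqrt (1 + (ee * norm cp) ^ 2) \<and>
          x (Suc k) /\<^sub>R norm (x (Suc k)) = sphere_Exp u (- (phi0 (ee * norm cp) * ee) *\<^sub>R cp)"
      using u1 geom[OF nu perp eepos] nx mpos npos by auto
  qed
qed

end
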